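(* Let $A$ be a commutative ring and $\sigma$ a hereditary torsion theory on $A$-modules. If $A$ is totally $\sigma$-artinian, then $\sigma$ is of finite type.
   Context: All rings are commutative with identity. $\mathcal{L}(\sigma)$ denotes the Gabriel filter of $\sigma$ (ideals $\mathfrak{h}$ with $A/\mathfrak{h}$ $\sigma$-torsion). $A$ is totally $\sigma$-artinian if for every descending chain of ideals $\mathfrak{a}_1\supseteq\mathfrak{a}_2\supseteq\cdots$ there exist an index $m$ and $\mathfrak{h}\in\mathcal{L}(\sigma)$ with $\mathfrak{a}_m\mathfrak{h}\subseteq\mathfrak{a}_s$ for all $s\ge m$. $\sigma$ is of finite type if $\mathcal{L}(\sigma)$ has a filter basis consisting of finitely generated ideals (every ideal in $\mathcal{L}(\sigma)$ contains a finitely generated ideal in $\mathcal{L}(\sigma)$). *)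

theory Defs
  imports "HOL-Algebra.Ideal_Product"
begin

definition colon_elem :: "('a, 'b) ring_scheme \<Rightarrow> 'a set \<Rightarrow> 'a \<Rightarrow> 'a set" where
  "colon_elem R J a = {x \<in> carrier R. x \<otimes>\<^bsub>R\<^esub> a \<in> J}"

text \<open>Hereditary torsion theories on R-modules correspond bijectively to Gabriel
  filters via sigma |-> L(sigma) = {h. R/h is sigma-torsion}.\<close>
definition gabriel_filter :: "('a, 'b) ring_scheme \<Rightarrow> 'a set set \<Rightarrow> bool" where
  "gabriel_filter R L \<longleftrightarrow>
     (\<forall>I\<in>L. ideal I R) \<and>
     carrier R \<in> L \<and>
     (\<forall>I\<in>L. \<forall>J. ideal J R \<and> I \<subseteq> J \<longrightarrow> J \<in> L) \<and>
     (\<forall>I\<in>L. \<forall>J\<in>L. I \<inter> J \<in> L) \<and>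
     (\<forall>I\<in>L. \<forall>a\<in>carrier R. colon_elem R I a \<in> L) \<and>
     (\<forall>J I. ideal J R \<and> I \<in> L \<and> (\<forall>a\<in>I. colon_elem R J a \<in> L) \<longrightarrow> J \<in> L)"

definition totally_artinian_wrt :: "('a, 'b) ring_scheme \<Rightarrow> 'a set set \<Rightarrow> bool" where
  "totally_artinian_wrt R L \<longleftrightarrow>
     (\<forall>\<aa> :: nat \<Rightarrow> 'a set. (\<forall>n. ideal (\<aa> n) R) \<and> (\<forall>n. \<aa> (Suc n) \<subseteq> \<aa> n) \<longrightarrow>
        (\<exists>m. \<exists>h\<in>L. \<forall>s\<ge>m. \<aa> m \<cdot>\<^bsub>R\<^esub> h \<subseteq> \<aa> s))"

definition finitely_generated_ideal :: "('a, 'b) ring_scheme \<Rightarrow> 'a set \<Rightarrow> bool" where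
  "finitely_generated_ideal R I \<longleftrightarrow> (\<exists>S. finite S \<and> S \<subseteq> carrier R \<and> I = Idl\<^bsub>R\<^esub> S)"

definition finite_type_filter :: "('a, 'b) ring_scheme \<Rightarrow> 'a set set \<Rightarrow> bool" where
  "finite_type_filter R L \<longleftrightarrow>
     (\<forall>I\<in>L. \<exists>J\<in>L. J \<subseteq> I \<and> finitely_generated_ideal R J)"

end

theory Submission
  imports Defs
begin

definition prim :: "('a, 'b) ring_scheme \<Rightarrow> 'a set \<Rightarrow> bool" where
  "prim R Q \<longleftrightarrow> ideal Q R \<and> \<one>\<^bsub>R\<^esub> \<notin> Q \<and>
     (\<forall>a\<in>carrier R. \<forall>b\<in>carrier R. a \<otimes>\<^bsub>R\<^esub> b \<in> Q \<longrightarrow> a \<in> Q \<or> b \<in> Q)"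

context cring
begin

lemma colon_ideal:
  assumes J: "ideal J R" and a: "a \<in> carrier R"
  shows "ideal (colon_elem R J a) R"
proof -
  interpret J: ideal J R by fact
  show ?thesis
    apply (intro idealI subgroup.intro)
    apply (simp_all add: ring_axioms colon_elem_def flip: a_inv_def)
         apply auto
    subgoal for x y using a by (simp add: l_distr J.a_closed)
    subgoal using a by simp
    subgoal for x using a by (simp add: l_minus J.a_inv_closed)
    subgoal for x y using a by (simp add: m_assoc J.I_l_closed)
    subgoal for x y using a by (metis J.I_r_closed m_assoc m_comm)
    done
qed

lemma colon_mem: "x \<in> colon_elem R J a \<longleftrightarrow> x \<in> carrier R \<and> x \<otimes> a \<in> J"
  by (simp add: colon_elem_def)

lemma gf_ideal: "gabriel_filter R L \<Longrightarrow> I \<in> L \<Longrightarrow> ideal I R"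
  unfolding gabriel_filter_def by (elim conjE) (drule bspec, assumption+)

lemma gf_up:
  assumes "gabriel_filter R L" "I \<in> L" "ideal J R" "I \<subseteq> J" shows "J \<in> L"
proof -
  have "\<forall>I\<in>L. \<forall>J. ideal J R \<and> I \<subseteq> J \<longrightarrow> J \<in> L"
    using assms(1) unfolding gabriel_filter_def by (elim conjE) assumption
  then show ?thesis using assms(2-4) by blast
qed

lemma gf_int:
  assumes "gabriel_filter R L" "I \<in> L" "J \<in> L" shows "I \<inter> J \<in> L"
proof -
  have "\<forall>I\<in>L. \<forall>J\<in>L. I \<inter> J \<in> L"
    using assms(1) unfolding gabriel_filter_def by (elim conjE) assumption
  then show ?thesis using assms(2-3) by blast
qed

lemma gf_carrier: "gabriel_filter R L \<Longrightarrow> carrier R \<in> L"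
  unfolding gabriel_filter_def by (elim conjE) assumption

lemma gf_last:
  assumes "gabriel_filter R L" "ideal J R" "I \<in> L" "\<And>a. a \<in> I \<Longrightarrow> colon_elem R J a \<in> L"
  shows "J \<in> L"
proof -
  have "\<forall>J I. ideal J R \<and> I \<in> L \<and> (\<forall>a\<in>I. colon_elem R J a \<in> L) \<longrightarrow> J \<in> L"
    using assms(1) unfolding gabriel_filter_def by (elim conjE) assumption
  then show ?thesis using assms(2-4) by blast
qed

definition clos :: "'a set set \<Rightarrow> 'a set \<Rightarrow> 'a set" where
  "clos L J = {x \<in> carrier R. colon_elem R J x \<in> L}"

lemma colon_sub_add: "ideal J R \<Longrightarrow> x \<in> carrier R \<Longrightarrow> y \<in> carrier R \<Longrightarrow> colon_elem R J x \<inter> colon_elem R J y \<subseteq> colon_elem R J (x \<oplus> y)"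
  by (auto simp: colon_elem_def r_distr ideal.axioms(1) additive_subgroup.a_closed)
lemma colon_zero: "ideal J R \<Longrightarrow> colon_elem R J \<zero> = carrier R"
  by (auto simp: colon_elem_def ideal.axioms(1) additive_subgroup.zero_closed)
lemma colon_sub_neg: "ideal J R \<Longrightarrow> x \<in> carrier R \<Longrightarrow> colon_elem R J x \<subseteq> colon_elem R J (\<ominus> x)"
  by (auto simp: colon_elem_def r_minus ideal.axioms(1) additive_subgroup.a_inv_closed)
lemma cm1: "ideal J R \<Longrightarrow> x \<in> carrier R \<Longrightarrow> u \<in> carrier R \<Longrightarrow> colon_elem R J x \<subseteq> colon_elem R J (u \<otimes> x)"
  by (auto simp: colon_elem_def) (metis ideal.I_l_closed m_lcomm)
lemma cm2: "ideal J R \<Longrightarrow> x \<in> carrier R \<Longrightarrow> u \<in> carrier R \<Longrightarrow> colon_elem R J x \<subseteq> colon_elem R J (x \<otimes> u)"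
  by (auto simp: colon_elem_def) (metis ideal.I_r_closed m_assoc)

lemma clos_ideal:
  assumes G: "gabriel_filter R L" and J: "ideal J R"
  shows "ideal (clos L J) R"
proof -
  have up: "colon_elem R J y \<in> L" if "colon_elem R J x \<in> L" "colon_elem R J x \<subseteq> colon_elem R J y"
    "y \<in> carrier R" for x y
    using gf_up[OF G that(1) colon_ideal[OF J that(3)] that(2)] .
  show ?thesis
    apply (intro idealI subgroup.intro)
    apply (simp_all add: ring_axioms clos_def flip: a_inv_def)
         apply auto
    subgoal for x y
    proof -
      assume xy: "x \<in> carrier R" "colon_elem R J x \<in> L" "y \<in> carrier R" "colon_elem R J y \<in> L"
      have "colon_elem R J x \<inter> colon_elem R J y \<in> L" using gf_int[OF G xy(2) xy(4)] .
      then show ?thesis using gf_up[OF G _ colon_ideal[OF J] colon_sub_add[OF J xy(1) xy(3)]] xy by simp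
    qed
    subgoal using colon_zero[OF J] gf_carrier[OF G] by simp
    subgoal for x using up[OF _ colon_sub_neg[OF J]] by simp
    subgoal for a x
      using up[OF _ cm1[OF J, of a x]] by simp
    subgoal for a x
      using up[OF _ cm2[OF J, of a x]] by simp
    done
qed

lemma clos_closed:
  assumes G: "gabriel_filter R L" and J: "ideal J R" and x: "x \<in> carrier R"
    and c: "colon_elem R (clos L J) x \<in> L"
  shows "x \<in> clos L J"
proof -
  have "colon_elem R J x \<in> L"
  proof (rule gf_last[OF G colon_ideal[OF J x] c])
    fix a assume a: "a \<in> colon_elem R (clos L J) x"
    then have ac: "a \<in> carrier R" and "a \<otimes> x \<in> clos L J" by (auto simp: colon_elem_def)
    then have "colon_elem R J (a \<otimes> x) \<in> L" by (simp add: clos_def)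
    moreover have "colon_elem R J (a \<otimes> x) = colon_elem R (colon_elem R J x) a"
      using ac x by (auto simp: colon_elem_def m_assoc)
    ultimately show "colon_elem R (colon_elem R J x) a \<in> L" by simp
  qed
  then show ?thesis using x by (simp add: clos_def)
qed

lemma clos_sup:
  assumes G: "gabriel_filter R L" and J: "ideal J R"
  shows "J \<subseteq> clos L J"
proof
  fix x assume "x \<in> J"
  then have "colon_elem R J x = carrier R" using J
    by (auto simp: colon_elem_def ideal.I_l_closed ideal.Icarr)
  then show "x \<in> clos L J" using gf_carrier[OF G] \<open>x \<in> J\<close> ideal.Icarr[OF J] by (simp add: clos_def)
qed

lemma clos_one:
  assumes "ideal J R" "J \<notin> L"
  shows "\<one> \<notin> clos L J"
proof -
  have "colon_elem R J \<one> = J" using assms by (auto simp: colon_elem_def ideal.Icarr)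
  then show ?thesis using assms by (simp add: clos_def)
qed

lemma sum_pidl_I: "c \<in> C \<Longrightarrow> r \<in> carrier R \<Longrightarrow> c \<oplus> r \<otimes> y \<in> set_add R C (PIdl y)"
  unfolding set_add_def' cgenideal_def by blast

lemma sum_pidl_E: "w \<in> set_add R C (PIdl y) \<Longrightarrow> \<exists>c r. c \<in> C \<and> r \<in> carrier R \<and> w = c \<oplus> r \<otimes> y"
  unfolding set_add_def' cgenideal_def by blast

lemma spectral:
  assumes G: "gabriel_filter R L" and A: "totally_artinian_wrt R L"
    and J: "ideal J R" and JL: "J \<notin> L"
  shows "\<exists>Q. prim R Q \<and> Q \<notin> L \<and> J \<subseteq> Q"
proof (rule ccontr)
  assume nQ: "\<not> ?thesis"
  define C where "C = clos L J"
  have Ci: "ideal C R" using clos_ideal[OF G J] by (simp add: C_def)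
  have Ccl: "\<And>x. x \<in> carrier R \<Longrightarrow> colon_elem R C x \<in> L \<Longrightarrow> x \<in> C"
    using clos_closed[OF G J] by (simp add: C_def)
  have JC: "J \<subseteq> C" using clos_sup[OF G J] by (simp add: C_def)
  have oneC: "\<one> \<notin> C" using clos_one[OF J JL] by (simp add: C_def)
  have step: "\<exists>p. fst p \<in> carrier R \<and> snd p \<in> carrier R \<and> fst p \<otimes> snd p \<in> colon_elem R C y
      \<and> fst p \<notin> colon_elem R C y \<and> snd p \<notin> colon_elem R C y"
    if y: "y \<in> carrier R" "y \<notin> C" for y
  proof -
    have Pi: "ideal (colon_elem R C y) R" using colon_ideal[OF Ci y(1)] .
    have "J \<subseteq> colon_elem R C y"
      using JC y Ci by (auto simp: colon_elem_def ideal.I_r_closed ideal.Icarr)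
    moreover have "colon_elem R C y \<notin> L" using Ccl y by blast
    moreover have "\<one> \<notin> colon_elem R C y" using y by (simp add: colon_elem_def)
    ultimately have "\<not> prim R (colon_elem R C y)" using nQ by blast
    then obtain p q where "p \<in> carrier R" "q \<in> carrier R" "p \<otimes> q \<in> colon_elem R C y"
      "p \<notin> colon_elem R C y" "q \<notin> colon_elem R C y"
      using Pi \<open>\<one> \<notin> colon_elem R C y\<close> unfolding prim_def by blast
    then show ?thesis by (intro exI[of _ "(p, q)"]) simp
  qed
  define nxt where "nxt y = (SOME p. fst p \<in> carrier R \<and> snd p \<in> carrier R \<and> fst p \<otimes> snd p \<in> colon_elem R C y
      \<and> fst p \<notin> colon_elem R C y \<and> snd p \<notin> colon_elem R C y)" for y
  have nxt: "fst (nxt y) \<in> carrier R \<and> snd (nxt y) \<in> carrier R \<and> fst (nxt y) \<otimes> snd (nxt y) \<in> colon_elem R C y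
      \<and> fst (nxt y) \<notin> colon_elem R C y \<and> snd (nxt y) \<notin> colon_elem R C y"
    if "y \<in> carrier R" "y \<notin> C" for y
    unfolding nxt_def using someI_ex[OF step[OF that]] .
  define ys where "ys = rec_nat \<one> (\<lambda>n y. fst (nxt y) \<otimes> y)"
  have ys0: "ys 0 = \<one>" and ysS: "\<And>n. ys (Suc n) = fst (nxt (ys n)) \<otimes> ys n"
    by (simp_all add: ys_def)
  have ysinv: "ys n \<in> carrier R \<and> ys n \<notin> C" for n
  proof (induction n)
    case 0 then show ?case using ys0 oneC by simp
  next
    case (Suc n)
    then have "fst (nxt (ys n)) \<in> carrier R" "fst (nxt (ys n)) \<notin> colon_elem R C (ys n)"
      using nxt by blast+
    then show ?case using Suc ysS[of n] by (simp add: colon_elem_def)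
  qed
  define a where "a n = set_add R C (PIdl (ys n))" for n
  have ai: "ideal (a n) R" for n
    unfolding a_def using add_ideals[OF Ci cgenideal_ideal[of "ys n"]] ysinv by simp
  have adesc: "a (Suc n) \<subseteq> a n" for n
  proof
    fix w assume "w \<in> a (Suc n)"
    then obtain c r where w: "c \<in> C" "r \<in> carrier R" "w = c \<oplus> r \<otimes> ys (Suc n)"
      unfolding a_def using sum_pidl_E by blast
    have f: "fst (nxt (ys n)) \<in> carrier R" using nxt ysinv by blast
    have "r \<otimes> ys (Suc n) = (r \<otimes> fst (nxt (ys n))) \<otimes> ys n"
      using ysS[of n] f w(2) ysinv[of n] by (simp add: m_assoc)
    then show "w \<in> a n" using w f unfolding a_def by (metis sum_pidl_I m_closed)
  qed
  obtain m h where h: "h \<in> L" and mh: "\<forall>s\<ge>m. a m \<cdot> h \<subseteq> a s"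
    using A[unfolded totally_artinian_wrt_def, rule_format, of a] ai adesc by blast
  define y where "y = ys m"
  define u where "u = fst (nxt y)"
  define b where "b = snd (nxt y)"
  have yc: "y \<in> carrier R" "y \<notin> C" using ysinv y_def by auto
  have uc: "u \<in> carrier R" and bc: "b \<in> carrier R" and ub: "u \<otimes> b \<in> colon_elem R C y"
    and bn: "b \<notin> colon_elem R C y"
    using nxt[OF yc] unfolding u_def b_def by auto
  have hi: "ideal h R" using gf_ideal[OF G h] .
  have "h \<subseteq> colon_elem R C (b \<otimes> y)"
  proof
    fix z assume z: "z \<in> h"
    have zc: "z \<in> carrier R" using ideal.Icarr[OF hi z] .
    have z0: "\<zero> \<in> C" using additive_subgroup.zero_closed[OF ideal.axioms(1)[OF Ci]] .
    have "\<zero> \<oplus> \<one> \<otimes> y \<in> set_add R C (PIdl y)" using z0 by (rule sum_pidl_I) simp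
    then have "y \<in> a m" using yc by (simp add: a_def y_def)
    then have "y \<otimes> z \<in> a m \<cdot> h" using z by (rule ideal_prod.prod)
    then have "y \<otimes> z \<in> a (Suc m)" using mh[rule_format, of "Suc m"] by auto
    then obtain c r where cr: "c \<in> C" "r \<in> carrier R" "y \<otimes> z = c \<oplus> r \<otimes> ys (Suc m)"
      unfolding a_def using sum_pidl_E by blast
    have ysm: "ys (Suc m) = u \<otimes> y" using ysS[of m] by (simp add: u_def y_def)
    have cc: "c \<in> carrier R" using ideal.Icarr[OF Ci cr(1)] .
    have e: "z \<otimes> (b \<otimes> y) = b \<otimes> c \<oplus> r \<otimes> ((u \<otimes> b) \<otimes> y)"
    proof -
      have "z \<otimes> (b \<otimes> y) = b \<otimes> (y \<otimes> z)" using zc bc yc by (simp add: m_ac)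
      also have "\<dots> = b \<otimes> (c \<oplus> r \<otimes> (u \<otimes> y))" using cr ysm by simp
      also have "\<dots> = b \<otimes> c \<oplus> r \<otimes> ((u \<otimes> b) \<otimes> y)" using bc cc cr(2) uc yc by (simp add: r_distr m_ac)
      finally show ?thesis .
    qed
    have "(u \<otimes> b) \<otimes> y \<in> C" using ub by (simp add: colon_elem_def)
    then have "r \<otimes> ((u \<otimes> b) \<otimes> y) \<in> C" using ideal.I_l_closed[OF Ci _ cr(2)] by blast
    moreover have "b \<otimes> c \<in> C" using ideal.I_l_closed[OF Ci cr(1) bc] .
    ultimately have "z \<otimes> (b \<otimes> y) \<in> C" unfolding e using additive_subgroup.a_closed[OF ideal.axioms(1)[OF Ci]] by simp
    then show "z \<in> colon_elem R C (b \<otimes> y)" using zc by (simp add: colon_elem_def)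
  qed
  then have "colon_elem R C (b \<otimes> y) \<in> L"
    using gf_up[OF G h colon_ideal[OF Ci]] bc yc by simp
  then have "b \<otimes> y \<in> C" using Ccl[OF m_closed[OF bc yc(1)]] by simp
  then show False using bn bc by (simp add: colon_elem_def)
qed


lemma alg1: "\<lbrakk>p\<in>carrier R; c\<in>carrier R; z\<in>carrier R; r\<in>carrier R; x\<in>carrier R;
   p \<otimes> z = c \<oplus> r \<otimes> (p \<otimes> x)\<rbrakk> \<Longrightarrow> p \<otimes> (z \<ominus> r \<otimes> x) = c"
  by algebra

lemma alg2: "\<lbrakk>z\<in>carrier R; t\<in>carrier R\<rbrakk> \<Longrightarrow> z = (z \<ominus> t) \<oplus> t"
  by algebra

lemma prim_pow:
  assumes "prim R Q" "x \<in> carrier R" "x \<notin> Q"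
  shows "x [^] (n::nat) \<notin> Q"
proof (induction n)
  case 0 then show ?case using assms(1) by (simp add: prim_def)
next
  case (Suc n)
  have "x [^] Suc n = x [^] n \<otimes> x" by (simp add: nat_pow_Suc)
  then show ?case using Suc assms unfolding prim_def by (metis nat_pow_closed)
qed

lemma incomp:
  assumes G: "gabriel_filter R L" and A: "totally_artinian_wrt R L"
    and pQ: "prim R Q" and pQ': "prim R Q'" and sub: "Q \<subseteq> Q'"
    and xQ': "x \<in> Q'" and xQ: "x \<notin> Q" and Q'L: "Q' \<notin> L"
  shows False
proof -
  have Qi: "ideal Q R" and Q'i: "ideal Q' R" using pQ pQ' by (auto simp: prim_def)
  have xc: "x \<in> carrier R" using ideal.Icarr[OF Q'i xQ'] .
  define a where "a n = set_add R Q (PIdl (x [^] n))" for n :: nat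
  have ai: "ideal (a n) R" for n
    unfolding a_def using add_ideals[OF Qi cgenideal_ideal[of "x [^] n"]] xc by simp
  have adesc: "a (Suc n) \<subseteq> a n" for n
  proof
    fix w assume "w \<in> a (Suc n)"
    then obtain c r where w: "c \<in> Q" "r \<in> carrier R" "w = c \<oplus> r \<otimes> x [^] Suc n"
      unfolding a_def using sum_pidl_E by blast
    have "r \<otimes> x [^] Suc n = (r \<otimes> x) \<otimes> x [^] n"
      using w(2) xc by (simp add: nat_pow_Suc m_ac)
    then have "w = c \<oplus> (r \<otimes> x) \<otimes> x [^] n" using w(3) by simp
    then show "w \<in> a n" unfolding a_def using sum_pidl_I[OF w(1) m_closed[OF w(2) xc]] by simp
  qed
  obtain m h where h: "h \<in> L" and mh: "\<forall>s\<ge>m. a m \<cdot> h \<subseteq> a s"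
    using A[unfolded totally_artinian_wrt_def, rule_format, of a] ai adesc by blast
  have hi: "ideal h R" using gf_ideal[OF G h] .
  have pc: "x [^] m \<in> carrier R" using xc by simp
  have "h \<subseteq> Q'"
  proof
    fix z assume z: "z \<in> h"
    have zc: "z \<in> carrier R" using ideal.Icarr[OF hi z] .
    have z0: "\<zero> \<in> Q" using additive_subgroup.zero_closed[OF ideal.axioms(1)[OF Qi]] .
    have "\<zero> \<oplus> \<one> \<otimes> x [^] m \<in> set_add R Q (PIdl (x [^] m))" using z0 by (rule sum_pidl_I) simp
    then have "x [^] m \<in> a m" using pc by (simp add: a_def)
    then have "x [^] m \<otimes> z \<in> a m \<cdot> h" using z by (rule ideal_prod.prod)
    then have "x [^] m \<otimes> z \<in> a (Suc m)" using mh[rule_format, of "Suc m"] by auto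
    then obtain c r where cr: "c \<in> Q" "r \<in> carrier R" "x [^] m \<otimes> z = c \<oplus> r \<otimes> x [^] Suc m"
      unfolding a_def using sum_pidl_E by blast
    have cc: "c \<in> carrier R" using ideal.Icarr[OF Qi cr(1)] .
    have "x [^] m \<otimes> z = c \<oplus> r \<otimes> (x [^] m \<otimes> x)" using cr(3) by (simp add: nat_pow_Suc)
    then have e: "x [^] m \<otimes> (z \<ominus> r \<otimes> x) = c" using alg1[OF pc cc zc cr(2) xc] by simp
    have dc: "z \<ominus> r \<otimes> x \<in> carrier R" using zc cr(2) xc by simp
    have "x [^] m \<notin> Q" using prim_pow[OF pQ xc xQ] .
    then have "z \<ominus> r \<otimes> x \<in> Q" using pQ e cr(1) pc dc unfolding prim_def by metis
    then have d: "z \<ominus> r \<otimes> x \<in> Q'" using sub by blast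
    have "r \<otimes> x \<in> Q'" using ideal.I_l_closed[OF Q'i xQ' cr(2)] .
    then have "(z \<ominus> r \<otimes> x) \<oplus> r \<otimes> x \<in> Q'"
      using additive_subgroup.a_closed[OF ideal.axioms(1)[OF Q'i] d] by simp
    then show "z \<in> Q'" using alg2[OF zc m_closed[OF cr(2) xc]] by simp
  qed
  then have "Q' \<in> L" using gf_up[OF G h Q'i] by simp
  then show False using Q'L by simp
qed

lemma main_aux:
  assumes G: "gabriel_filter R L" and A: "totally_artinian_wrt R L" and I: "I \<in> L"
  shows "\<exists>J\<in>L. J \<subseteq> I \<and> finitely_generated_ideal R J"
proof (rule ccontr)
  assume nJ: "\<not> ?thesis"
  have Ii: "ideal I R" using gf_ideal[OF G I] .
  have Ic: "I \<subseteq> carrier R" using ideal.Icarr[OF Ii] by blast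
  have ex: "\<exists>Q. prim R Q \<and> Q \<notin> L \<and> S \<subseteq> Q" if S: "finite S" "S \<subseteq> I" for S
  proof -
    have Sc: "S \<subseteq> carrier R" using S Ic by blast
    have Si: "ideal (Idl S) R" using genideal_ideal[OF Sc] .
    have SI: "Idl S \<subseteq> I" using genideal_minimal[OF Ii S(2)] .
    have "finitely_generated_ideal R (Idl S)" unfolding finitely_generated_ideal_def using S(1) Sc by blast
    then have "Idl S \<notin> L" using nJ SI by blast
    then obtain Q where "prim R Q" "Q \<notin> L" "Idl S \<subseteq> Q" using spectral[OF G A Si] by blast
    moreover have "S \<subseteq> Idl S" using genideal_self[OF Sc] .
    ultimately show ?thesis by blast
  qed
  have exx: "\<exists>x. x \<in> I \<and> x \<notin> Q" if "prim R Q" "Q \<notin> L" for Q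
  proof (rule ccontr)
    assume "\<not> ?thesis"
    then have "I \<subseteq> Q" by blast
    then have "Q \<in> L" using gf_up[OF G I] that(1) by (simp add: prim_def)
    then show False using that(2) by simp
  qed
  define QQ where "QQ S = (SOME Q. prim R Q \<and> Q \<notin> L \<and> S \<subseteq> Q)" for S
  define XX where "XX Q = (SOME x. x \<in> I \<and> x \<notin> Q)" for Q
  have QQ: "prim R (QQ S) \<and> QQ S \<notin> L \<and> S \<subseteq> QQ S" if "finite S" "S \<subseteq> I" for S
    unfolding QQ_def using someI_ex[OF ex[OF that]] .
  have XX: "XX Q \<in> I \<and> XX Q \<notin> Q" if "prim R Q" "Q \<notin> L" for Q
    unfolding XX_def using someI_ex[OF exx[OF that]] .
  define Ss where "Ss = rec_nat {} (\<lambda>n S. insert (XX (QQ S)) S)"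
  have Ss0: "Ss 0 = {}" and SsS: "\<And>n. Ss (Suc n) = insert (XX (QQ (Ss n))) (Ss n)"
    by (simp_all add: Ss_def)
  have Ssinv: "finite (Ss n) \<and> Ss n \<subseteq> I" for n
  proof (induction n)
    case 0 then show ?case using Ss0 by simp
  next
    case (Suc n)
    then have "prim R (QQ (Ss n))" "QQ (Ss n) \<notin> L" using QQ by blast+
    then have "XX (QQ (Ss n)) \<in> I" using XX by blast
    then show ?case using Suc SsS[of n] by simp
  qed
  define Qs where "Qs n = QQ (Ss n)" for n
  define xs where "xs n = XX (Qs n)" for n
  have Qs: "prim R (Qs n) \<and> Qs n \<notin> L \<and> Ss n \<subseteq> Qs n" for n
    unfolding Qs_def using QQ Ssinv by blast
  have xs: "xs n \<in> I \<and> xs n \<notin> Qs n" for n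
    unfolding xs_def using XX Qs by blast
  have mem: "i < n \<Longrightarrow> xs i \<in> Ss n" for i n
  proof (induction n)
    case 0 then show ?case by simp
  next
    case (Suc n)
    have "Ss (Suc n) = insert (xs n) (Ss n)" using SsS[of n] by (simp add: xs_def Qs_def)
    then show ?case using Suc by (cases "i = n") auto
  qed
  have ncomp: "\<not> Qs i \<subseteq> Qs n" if "i < n" for i n
  proof
    assume sub: "Qs i \<subseteq> Qs n"
    have "xs i \<in> Qs n" using mem[OF that] Qs[of n] by blast
    moreover have "xs i \<notin> Qs i" using xs by blast
    moreover have "Qs n \<notin> L" using Qs by blast
    ultimately show False using incomp[OF G A _ _ sub] Qs by blast
  qed
  define a where "a = rec_nat (carrier R) (\<lambda>n B. B \<inter> Qs n)"
  have a0: "a 0 = carrier R" and aS: "\<And>n. a (Suc n) = a n \<inter> Qs n"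
    by (simp_all add: a_def)
  have ai: "ideal (a n) R" for n
  proof (induction n)
    case 0 then show ?case using a0 oneideal by simp
  next
    case (Suc n)
    have "ideal (Qs n) R" using Qs by (simp add: prim_def)
    then show ?case using aS[of n] i_intersect[OF Suc] by simp
  qed
  have adesc: "a (Suc n) \<subseteq> a n" for n using aS by blast
  obtain m h where h: "h \<in> L" and mh: "\<forall>s\<ge>m. a m \<cdot> h \<subseteq> a s"
    using A[unfolded totally_artinian_wrt_def, rule_format, of a] ai adesc by blast
  have pm: "prim R (Qs m)" using Qs by blast
  have wit: "k \<le> m \<Longrightarrow> \<exists>w\<in>a k. w \<notin> Qs m" for k
  proof (induction k)
    case 0 then show ?case using a0 pm by (auto simp: prim_def)
  next
    case (Suc k)
    then obtain w where w: "w \<in> a k" "w \<notin> Qs m" by auto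
    have "k < m" using Suc by simp
    then obtain q where q: "q \<in> Qs k" "q \<notin> Qs m" using ncomp by blast
    have Qki: "ideal (Qs k) R" using Qs by (simp add: prim_def)
    have wc: "w \<in> carrier R" using ideal.Icarr[OF ai w(1)] .
    have qc: "q \<in> carrier R" using ideal.Icarr[OF Qki q(1)] .
    have "w \<otimes> q \<in> a k" using ideal.I_r_closed[OF ai w(1) qc] .
    moreover have "w \<otimes> q \<in> Qs k" using ideal.I_l_closed[OF Qki q(1) wc] .
    moreover have "w \<otimes> q \<notin> Qs m" using pm wc qc w(2) q(2) unfolding prim_def by blast
    ultimately show ?case using aS[of k] by blast
  qed
  obtain w where w: "w \<in> a m" "w \<notin> Qs m" using wit[of m] by auto
  have hi: "ideal h R" using gf_ideal[OF G h] .
  have "\<not> h \<subseteq> Qs m"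
  proof
    assume "h \<subseteq> Qs m"
    then have "Qs m \<in> L" using gf_up[OF G h] pm by (simp add: prim_def)
    then show False using Qs by blast
  qed
  then obtain z where z: "z \<in> h" "z \<notin> Qs m" by blast
  have "w \<otimes> z \<in> a m \<cdot> h" using w(1) z(1) by (rule ideal_prod.prod)
  then have "w \<otimes> z \<in> a (Suc m)" using mh[rule_format, of "Suc m"] by auto
  then have "w \<otimes> z \<in> Qs m" using aS by blast
  moreover have "w \<in> carrier R" using ideal.Icarr[OF ai w(1)] .
  moreover have "z \<in> carrier R" using ideal.Icarr[OF hi z(1)] .
  ultimately show False using pm w(2) z(2) unfolding prim_def by blast
qed

end

theorem mainTheorem2:
  fixes R :: "('a, 'b) ring_scheme" and L :: "'a set set"
  assumes "cring R"
    and "gabriel_filter R L"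
    and "totally_artinian_wrt R L"
  shows "finite_type_filter R L"
  unfolding finite_type_filter_def
  using cring.main_aux[OF assms(1) assms(2) assms(3)] by blast

end
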